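(* Let $R$ be a ring. If there exists a finitely generated flat left $R$-module which is not projective, then the ring $Q_l(R)$ is not semi-simple.
   Context: Rings are associative with $1$. A multiplicatively closed subset $S$ ($1\in S$, $0\notin S$) is a left Ore set if $Sr\cap Rs\ne\emptyset$ for all $r\in R,s\in S$, and a left denominator set if moreover $rs=0$ ($s\in S$) implies $tr=0$ for some $t\in S$. $S_0(R)$ is the largest left denominator set of $R$ consisting of regular elements (it exists), and $Q_l(R):=S_0(R)^{-1}R$ is the largest left quotient ring of $R$. *)

theory Defs
  imports Main
begin

text \<open>A module over the ring 'a :: ring_1: carrier, addition, zero and
  scalar action.  For a left module, msmult r x is r x; for a right module,
  msmult r x is x r.\<close>

record ('a, 'm) lmod =
  mcarrier :: "'m set"
  madd :: "'m \<Rightarrow> 'm \<Rightarrow> 'm"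
  mzero :: 'm
  msmult :: "'a \<Rightarrow> 'm \<Rightarrow> 'm"

definition abelian_carrier :: "('a, 'm) lmod \<Rightarrow> bool" where
  "abelian_carrier M \<longleftrightarrow>
     mzero M \<in> mcarrier M \<and>
     (\<forall>x\<in>mcarrier M. \<forall>y\<in>mcarrier M. madd M x y \<in> mcarrier M) \<and>
     (\<forall>x\<in>mcarrier M. \<forall>y\<in>mcarrier M. \<forall>z\<in>mcarrier M.
        madd M (madd M x y) z = madd M x (madd M y z)) \<and>
     (\<forall>x\<in>mcarrier M. \<forall>y\<in>mcarrier M. madd M x y = madd M y x) \<and>
     (\<forall>x\<in>mcarrier M. madd M (mzero M) x = x) \<and>
     (\<forall>x\<in>mcarrier M. \<exists>y\<in>mcarrier M. madd M x y = mzero M)"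

definition left_module :: "('a::ring_1, 'm) lmod \<Rightarrow> bool" where
  "left_module M \<longleftrightarrow> abelian_carrier M \<and>
     (\<forall>r. \<forall>x\<in>mcarrier M. msmult M r x \<in> mcarrier M) \<and>
     (\<forall>r s. \<forall>x\<in>mcarrier M. msmult M (r * s) x = msmult M r (msmult M s x)) \<and>
     (\<forall>x\<in>mcarrier M. msmult M 1 x = x) \<and>
     (\<forall>r s. \<forall>x\<in>mcarrier M. msmult M (r + s) x = madd M (msmult M r x) (msmult M s x)) \<and>
     (\<forall>r. \<forall>x\<in>mcarrier M. \<forall>y\<in>mcarrier M.
        msmult M r (madd M x y) = madd M (msmult M r x) (msmult M r y))"

definition right_module :: "('a::ring_1, 'm) lmod \<Rightarrow> bool" where
  "right_module M \<longleftrightarrow> abelian_carrier M \<and>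
     (\<forall>r. \<forall>x\<in>mcarrier M. msmult M r x \<in> mcarrier M) \<and>
     (\<forall>r s. \<forall>x\<in>mcarrier M. msmult M (r * s) x = msmult M s (msmult M r x)) \<and>
     (\<forall>x\<in>mcarrier M. msmult M 1 x = x) \<and>
     (\<forall>r s. \<forall>x\<in>mcarrier M. msmult M (r + s) x = madd M (msmult M r x) (msmult M s x)) \<and>
     (\<forall>r. \<forall>x\<in>mcarrier M. \<forall>y\<in>mcarrier M.
        msmult M r (madd M x y) = madd M (msmult M r x) (msmult M r y))"

definition mod_hom :: "('a, 'm) lmod \<Rightarrow> ('a, 'n) lmod \<Rightarrow> ('m \<Rightarrow> 'n) set" where
  "mod_hom M N = {f. (\<forall>x\<in>mcarrier M. f x \<in> mcarrier N) \<and>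
     (\<forall>x\<in>mcarrier M. \<forall>y\<in>mcarrier M. f (madd M x y) = madd N (f x) (f y)) \<and>
     (\<forall>r. \<forall>x\<in>mcarrier M. f (msmult M r x) = msmult N r (f x))}"

inductive_set mspan :: "('a, 'm) lmod \<Rightarrow> 'm set \<Rightarrow> 'm set" for M G where
  zero: "mzero M \<in> mspan M G"
| step: "x \<in> mspan M G \<Longrightarrow> g \<in> G \<Longrightarrow> madd M x (msmult M r g) \<in> mspan M G"

definition finitely_generated :: "('a, 'm) lmod \<Rightarrow> bool" where
  "finitely_generated M \<longleftrightarrow>
     (\<exists>G. finite G \<and> G \<subseteq> mcarrier M \<and> mcarrier M = mspan M G)"

definition free_lmod :: "'i set \<Rightarrow> ('a::ring_1, 'i \<Rightarrow> 'a) lmod" where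
  "free_lmod I = \<lparr> mcarrier = {f. finite {i. f i \<noteq> 0} \<and> (\<forall>i. i \<notin> I \<longrightarrow> f i = 0)},
                   madd = (\<lambda>f g i. f i + g i),
                   mzero = (\<lambda>i. 0),
                   msmult = (\<lambda>r f i. r * f i) \<rparr>"

text \<open>Projective: direct summand of a free module (a free module on a basis indexed
  by a set of the same type as the carrier, which is enough: every projective M is
  a direct summand of the free module on the set M).\<close>

definition projective :: "('a::ring_1, 'm) lmod \<Rightarrow> bool" where
  "projective M \<longleftrightarrow> (\<exists>(I::'m set) i p.
     i \<in> mod_hom M (free_lmod I) \<and> p \<in> mod_hom (free_lmod I) M \<and>
     (\<forall>x\<in>mcarrier M. p (i x) = x))"

text \<open>N \<otimes>_R M (N a right, M a left module) is the free abelian group on N \<times> M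
  (finitely supported integer-valued functions) modulo the subgroup generated by
  the bilinearity/balancing relations.\<close>

definition delta :: "'p \<Rightarrow> 'p \<Rightarrow> int" where
  "delta p = (\<lambda>q. if q = p then 1 else 0)"

definition tensor_gens :: "('a, 'n) lmod \<Rightarrow> ('a, 'm) lmod \<Rightarrow> ('n \<times> 'm \<Rightarrow> int) set" where
  "tensor_gens N M =
     {(\<lambda>q. delta (madd N n n', m) q - delta (n, m) q - delta (n', m) q) | n n' m.
         n \<in> mcarrier N \<and> n' \<in> mcarrier N \<and> m \<in> mcarrier M}
   \<union> {(\<lambda>q. delta (n, madd M m m') q - delta (n, m) q - delta (n, m') q) | n m m'.
         n \<in> mcarrier N \<and> m \<in> mcarrier M \<and> m' \<in> mcarrier M}
   \<union> {(\<lambda>q. delta (msmult N r n, m) q - delta (n, msmult M r m) q) | n r m.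
         n \<in> mcarrier N \<and> m \<in> mcarrier M}"

inductive_set tensor_rel :: "('a, 'n) lmod \<Rightarrow> ('a, 'm) lmod \<Rightarrow> ('n \<times> 'm \<Rightarrow> int) set"
  for N M where
  zero: "(\<lambda>q. 0) \<in> tensor_rel N M"
| add: "f \<in> tensor_rel N M \<Longrightarrow> g \<in> tensor_gens N M \<Longrightarrow> (\<lambda>q. f q + g q) \<in> tensor_rel N M"
| sub: "f \<in> tensor_rel N M \<Longrightarrow> g \<in> tensor_gens N M \<Longrightarrow> (\<lambda>q. f q - g q) \<in> tensor_rel N M"

text \<open>M is flat iff for every right module N and submodule N' \<subseteq> N the induced
  map N' \<otimes> M \<rightarrow> N \<otimes> M is injective, i.e. a formal sum on N' \<times> M that is a
  relation in N \<otimes> M is already a relation in N' \<otimes> M.\<close>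

definition flat :: "('a::ring_1, 'm) lmod \<Rightarrow> bool" where
  "flat M \<longleftrightarrow> (\<forall>(N :: ('a, nat \<Rightarrow> 'a) lmod) C.
     right_module N \<and> C \<subseteq> mcarrier N \<and> right_module (N\<lparr>mcarrier := C\<rparr>) \<longrightarrow>
     (\<forall>z. finite {p. z p \<noteq> 0} \<and> {p. z p \<noteq> 0} \<subseteq> C \<times> mcarrier M \<and>
          z \<in> tensor_rel N M \<longrightarrow> z \<in> tensor_rel (N\<lparr>mcarrier := C\<rparr>) M))"

definition regular_elem :: "'a::ring_1 \<Rightarrow> bool" where
  "regular_elem s \<longleftrightarrow> (\<forall>r. r * s = 0 \<longrightarrow> r = 0) \<and> (\<forall>r. s * r = 0 \<longrightarrow> r = 0)"

definition mult_closed :: "'a::ring_1 set \<Rightarrow> bool" where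
  "mult_closed S \<longleftrightarrow> 1 \<in> S \<and> 0 \<notin> S \<and> (\<forall>s\<in>S. \<forall>t\<in>S. s * t \<in> S)"

definition left_ore_set :: "'a::ring_1 set \<Rightarrow> bool" where
  "left_ore_set S \<longleftrightarrow> mult_closed S \<and>
     (\<forall>r. \<forall>s\<in>S. \<exists>s'\<in>S. \<exists>r'. s' * r = r' * s)"

definition left_denominator_set :: "'a::ring_1 set \<Rightarrow> bool" where
  "left_denominator_set S \<longleftrightarrow> left_ore_set S \<and>
     (\<forall>r. \<forall>s\<in>S. r * s = 0 \<longrightarrow> (\<exists>t\<in>S. t * r = 0))"

definition S0 :: "'a::ring_1 set" where
  "S0 = (THE S. left_denominator_set S \<and> (\<forall>s\<in>S. regular_elem s) \<and>
          (\<forall>T. left_denominator_set T \<and> (\<forall>s\<in>T. regular_elem s) \<longrightarrow> T \<subseteq> S))"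

definition is_left_ring_of_fractions ::
  "'a::ring_1 set \<Rightarrow> ('a \<Rightarrow> 'q::ring_1) \<Rightarrow> bool" where
  "is_left_ring_of_fractions S \<sigma> \<longleftrightarrow>
     (\<forall>x y. \<sigma> (x + y) = \<sigma> x + \<sigma> y) \<and> (\<forall>x y. \<sigma> (x * y) = \<sigma> x * \<sigma> y) \<and> \<sigma> 1 = 1 \<and>
     (\<forall>s\<in>S. \<exists>u. u * \<sigma> s = 1 \<and> \<sigma> s * u = 1) \<and>
     (\<forall>q. \<exists>s\<in>S. \<exists>r. \<sigma> s * q = \<sigma> r) \<and>
     (\<forall>r. \<sigma> r = 0 \<longleftrightarrow> (\<exists>s\<in>S. s * r = 0))"

definition left_ideal :: "'q::ring_1 set \<Rightarrow> bool" where
  "left_ideal L \<longleftrightarrow> 0 \<in> L \<and> (\<forall>x\<in>L. \<forall>y\<in>L. x + y \<in> L) \<and> (\<forall>x\<in>L. - x \<in> L) \<and>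
     (\<forall>r. \<forall>x\<in>L. r * x \<in> L)"

text \<open>A ring is semisimple iff the left regular module is semisimple, i.e. every
  left ideal is a direct summand.\<close>

definition semisimple_ring :: "'q::ring_1 itself \<Rightarrow> bool" where
  "semisimple_ring TYPE('q) \<longleftrightarrow> (\<forall>L::'q set. left_ideal L \<longrightarrow>
     (\<exists>L'. left_ideal L' \<and> L \<inter> L' = {0} \<and> (\<forall>x. \<exists>a\<in>L. \<exists>b\<in>L'. x = a + b)))"

end

theory Submission
  imports Defs
begin

section \<open>Existence of S0\<close>

definition Ureg :: "'a::ring_1 set" where
  "Ureg = \<Union>{T. left_denominator_set T \<and> (\<forall>s\<in>T. regular_elem s)}"

inductive_set mgen :: "'a::ring_1 set" where
  one: "1 \<in> mgen"
| step: "s \<in> mgen \<Longrightarrow> u \<in> Ureg \<Longrightarrow> u * s \<in> mgen"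

lemma regular_mult:
  assumes "regular_elem (a::'a::ring_1)" "regular_elem b" shows "regular_elem (a*b)"
  using assms unfolding regular_elem_def by (metis mult.assoc)

lemma Ureg_regular: "u \<in> Ureg \<Longrightarrow> regular_elem u"
  unfolding Ureg_def by auto

lemma mgen_regular: "s \<in> mgen \<Longrightarrow> regular_elem s"
proof (induction rule: mgen.induct)
  case one then show ?case by (simp add: regular_elem_def)
next
  case (step s u) then show ?case using regular_mult Ureg_regular by blast
qed

lemma mgen_mult: "s \<in> mgen \<Longrightarrow> t \<in> mgen \<Longrightarrow> s * t \<in> mgen"
proof (induction rule: mgen.induct)
  case one then show ?case by simp
next
  case (step s u) then show ?case by (metis mgen.step mult.assoc)
qed

lemma Ureg_ore:
  assumes "u \<in> Ureg" shows "\<exists>t\<in>Ureg. \<exists>r'. t * r = r' * u"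
proof -
  from assms obtain T where T: "left_denominator_set T" "\<forall>s\<in>T. regular_elem s" "u \<in> T"
    unfolding Ureg_def by auto
  then obtain t r' where "t \<in> T" "t * r = r' * u"
    unfolding left_denominator_set_def left_ore_set_def by blast
  moreover have "T \<subseteq> Ureg" using T unfolding Ureg_def by auto
  ultimately show ?thesis by blast
qed

lemma Ureg_mgen: "u \<in> Ureg \<Longrightarrow> u \<in> mgen"
  using mgen.step[OF mgen.one] by fastforce

lemma mgen_ore: "s \<in> mgen \<Longrightarrow> \<forall>r. \<exists>s'\<in>mgen. \<exists>r'. s' * r = r' * s"
proof (induction rule: mgen.induct)
  case one then show ?case using mgen.one by force
next
  case (step s u)
  show ?case
  proof
    fix r
    obtain s1 r1 where s1: "s1 \<in> mgen" "s1 * r = r1 * s" using step.IH by blast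
    obtain t r2 where t: "t \<in> Ureg" "t * r1 = r2 * u" using Ureg_ore[OF step.hyps(2)] by blast
    have "(t * s1) * r = r2 * (u * s)" using s1 t by (metis mult.assoc)
    moreover have "t * s1 \<in> mgen" using s1 t mgen.step by blast
    ultimately show "\<exists>s'\<in>mgen. \<exists>r'. s' * r = r' * (u * s)" by blast
  qed
qed

lemma mgen_lds: "left_denominator_set (mgen :: 'a::ring_1 set)"
proof -
  have z: "(0::'a) \<notin> mgen" using mgen_regular unfolding regular_elem_def
    by (metis zero_neq_one mult_zero_right)
  have "mult_closed (mgen :: 'a set)"
    unfolding mult_closed_def using z mgen.one mgen_mult by blast
  moreover have "\<forall>r. \<forall>s\<in>(mgen::'a set). \<exists>s'\<in>mgen. \<exists>r'. s' * r = r' * s"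
    using mgen_ore by blast
  ultimately have "left_ore_set (mgen :: 'a set)"
    unfolding left_ore_set_def by blast
  moreover have "\<forall>r. \<forall>s\<in>(mgen::'a set). r * s = 0 \<longrightarrow> (\<exists>t\<in>mgen. t * r = 0)"
  proof (intro allI ballI impI)
    fix r s assume "s \<in> (mgen::'a set)" "r * s = 0"
    then have "r = 0" using mgen_regular unfolding regular_elem_def by blast
    then show "\<exists>t\<in>mgen. t * r = 0" using mgen.one by auto
  qed
  ultimately show ?thesis unfolding left_denominator_set_def by blast
qed

definition S0P :: "'a::ring_1 set \<Rightarrow> bool" where
  "S0P S \<longleftrightarrow> left_denominator_set S \<and> (\<forall>s\<in>S. regular_elem s) \<and>
          (\<forall>T. left_denominator_set T \<and> (\<forall>s\<in>T. regular_elem s) \<longrightarrow> T \<subseteq> S)"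

lemma S0P_mgen: "S0P (mgen :: 'a::ring_1 set)"
  unfolding S0P_def
proof (intro conjI allI impI)
  fix T :: "'a set" assume "left_denominator_set T \<and> (\<forall>s\<in>T. regular_elem s)"
  then have "T \<subseteq> Ureg" unfolding Ureg_def by blast
  then show "T \<subseteq> mgen" using Ureg_mgen by blast
qed (use mgen_lds mgen_regular in auto)

lemma S0P_uniq: "S0P (S :: 'a::ring_1 set) \<Longrightarrow> S = mgen"
proof -
  assume H: "S0P S"
  have "mgen \<subseteq> S" using H mgen_lds mgen_regular unfolding S0P_def by blast
  moreover have "S \<subseteq> Ureg" using H unfolding Ureg_def S0P_def by blast
  moreover have "S \<subseteq> mgen" using calculation(2) Ureg_mgen by blast
  ultimately show "S = mgen" by blast
qed

lemma S0_eq: "(S0 :: 'a::ring_1 set) = mgen"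
proof -
  have "S0 = (THE S. S0P (S::'a set))" unfolding S0_def S0P_def by simp
  also have "\<dots> = mgen" using S0P_mgen S0P_uniq by (rule the_equality)
  finally show ?thesis .
qed

lemma S0_regular: "s \<in> (S0 :: 'a::ring_1 set) \<Longrightarrow> regular_elem s"
  using S0_eq mgen_regular by blast

section \<open>Semisimple: principal left ideals\<close>

lemma li_mult: "left_ideal L \<Longrightarrow> x \<in> L \<Longrightarrow> r * x \<in> L"
  unfolding left_ideal_def by blast
lemma li_add: "left_ideal L \<Longrightarrow> x \<in> L \<Longrightarrow> y \<in> L \<Longrightarrow> x + y \<in> L"
  unfolding left_ideal_def by blast
lemma li_neg: "left_ideal L \<Longrightarrow> x \<in> L \<Longrightarrow> - x \<in> L"
  unfolding left_ideal_def by blast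
lemma li_zero: "left_ideal L \<Longrightarrow> 0 \<in> L"
  unfolding left_ideal_def by blast

lemma ss_principal:
  assumes "semisimple_ring TYPE('q::ring_1)" "left_ideal (L::'q set)"
  shows "\<exists>g\<in>L. \<forall>x\<in>L. \<exists>d. x = d * g"
proof -
  have "\<exists>L'. left_ideal L' \<and> L \<inter> L' = {0} \<and> (\<forall>x. \<exists>a\<in>L. \<exists>b\<in>L'. x = a + b)"
    using assms(1) assms(2) unfolding semisimple_ring_def by blast
  then obtain L' where L': "left_ideal L'" "L \<inter> L' = {0}" "\<forall>x. \<exists>a\<in>L. \<exists>b\<in>L'. x = a + b"
    by blast
  have "\<exists>a\<in>L. \<exists>b\<in>L'. 1 = a + b" using L'(3) by (rule spec)
  then obtain a b where ab: "a \<in> L" "b \<in> L'" "1 = a + b" by blast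
  have "\<forall>x\<in>L. x = x * a"
  proof
    fix x assume x: "x \<in> L"
    have xa: "x * a \<in> L" using li_mult[OF assms(2) ab(1)] .
    have "x * b \<in> L'" using li_mult[OF L'(1) ab(2)] .
    moreover have e: "x * b = x + - (x * a)"
    proof -
      have "b = 1 - a" using ab(3) by (metis add_diff_cancel_left')
      then have "x * b = x * (1 - a)" by simp
      also have "\<dots> = x + - (x * a)" by (simp add: right_diff_distrib)
      finally show ?thesis .
    qed
    moreover have "x + - (x*a) \<in> L"
      using li_add[OF assms(2) x li_neg[OF assms(2) xa]] .
    ultimately have "x * b \<in> L \<inter> L'" by (metis IntI)
    then have xb: "x * b = 0" using L'(2) by blast
    have "x = (x + - (x * a)) + x * a" by simp
    also have "\<dots> = x * a" using e xb by simp
    finally show "x = x * a" .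
  qed
  then show ?thesis using ab(1) by blast
qed


lemma comb_merge:
  fixes v :: "'b \<Rightarrow> 'q::ring_1"
  assumes "finite F1" "finite F2"
  shows "(\<Sum>b\<in>F1. c1 b * v b) + (\<Sum>b\<in>F2. c2 b * v b) =
    (\<Sum>b\<in>F1\<union>F2. ((if b\<in>F1 then c1 b else 0) + (if b\<in>F2 then c2 b else 0)) * v b)"
proof -
  have 1: "(\<Sum>b\<in>F1\<union>F2. (if b\<in>F1 then c1 b else 0) * v b) = (\<Sum>b\<in>F1. c1 b * v b)"
    by (rule sum.mono_neutral_cong_right) (use assms in auto)
  have 2: "(\<Sum>b\<in>F1\<union>F2. (if b\<in>F2 then c2 b else 0) * v b) = (\<Sum>b\<in>F2. c2 b * v b)"
    by (rule sum.mono_neutral_cong_right) (use assms in auto)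
  show ?thesis unfolding distrib_right sum.distrib 1 2 ..
qed

definition idl :: "'b set \<Rightarrow> ('b \<Rightarrow> 'q::ring_1) \<Rightarrow> 'q set" where
  "idl K v = {x. \<exists>F c. finite F \<and> F \<subseteq> K \<and> x = (\<Sum>b\<in>F. c b * v b)}"

lemma idlI: "finite F \<Longrightarrow> F \<subseteq> K \<Longrightarrow> x = (\<Sum>b\<in>F. c b * v b) \<Longrightarrow> x \<in> idl K v"
  unfolding idl_def by auto

lemma idlE: assumes "x \<in> idl K v"
  obtains F c where "finite F" "F \<subseteq> K" "x = (\<Sum>b\<in>F. c b * v b)"
  using assms unfolding idl_def by auto

lemma idl_left_ideal: "left_ideal (idl K v)"
  unfolding left_ideal_def
proof (intro conjI ballI allI)
  show "0 \<in> idl K v" by (rule idlI[of "{}"]) auto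
next
  fix x y assume x: "x \<in> idl K v" and y: "y \<in> idl K v"
  obtain F1 c1 where h1: "finite F1" "F1 \<subseteq> K" "x = (\<Sum>b\<in>F1. c1 b * v b)" using x by (rule idlE)
  obtain F2 c2 where h2: "finite F2" "F2 \<subseteq> K" "y = (\<Sum>b\<in>F2. c2 b * v b)" using y by (rule idlE)
  have "x + y = (\<Sum>b\<in>F1\<union>F2. ((if b\<in>F1 then c1 b else 0) + (if b\<in>F2 then c2 b else 0)) * v b)"
    unfolding h1(3) h2(3) by (rule comb_merge[OF h1(1) h2(1)])
  then show "x + y \<in> idl K v" by (rule idlI[rotated 2]) (use h1 h2 in auto)
next
  fix x assume x: "x \<in> idl K v"
  obtain F c where h: "finite F" "F \<subseteq> K" "x = (\<Sum>b\<in>F. c b * v b)" using x by (rule idlE)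
  have "- x = (\<Sum>b\<in>F. (- c b) * v b)" unfolding h(3) by (simp add: sum_negf)
  then show "- x \<in> idl K v" by (rule idlI[rotated 2]) (use h in auto)
next
  fix r x assume x: "x \<in> idl K v"
  obtain F c where h: "finite F" "F \<subseteq> K" "x = (\<Sum>b\<in>F. c b * v b)" using x by (rule idlE)
  have "r * x = (\<Sum>b\<in>F. (r * c b) * v b)" unfolding h(3) by (simp add: sum_distrib_left mult.assoc)
  then show "r * x \<in> idl K v" by (rule idlI[rotated 2]) (use h in auto)
qed

lemma noeth:
  fixes K :: "'b set" and \<phi> :: "'b \<Rightarrow> nat \<Rightarrow> 'q::ring_1" and n :: nat
  assumes ss: "semisimple_ring TYPE('q::ring_1)"
  shows "\<exists>F. finite F \<and> F \<subseteq> K \<and> (\<forall>a\<in>K. \<exists>c. \<forall>j<n. (\<phi> a j :: 'q) = (\<Sum>b\<in>F. c b * \<phi> b j))"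
proof (induction n arbitrary: \<phi>)
  case 0
  show ?case by (rule exI[of _ "{}"]) simp
next
  case (Suc n)
  define I where "I = idl K (\<lambda>b. \<phi> b n)"
  have "left_ideal I" unfolding I_def by (rule idl_left_ideal)
  have "\<exists>g\<in>I. \<forall>x\<in>I. \<exists>d. x = d * g" using ss_principal[OF ss] \<open>left_ideal I\<close> by blast
  then obtain g where g: "g \<in> I" "\<forall>x\<in>I. \<exists>d. x = d * g" by blast
  obtain F1 c1 where F1: "finite F1" "F1 \<subseteq> K" "g = (\<Sum>b\<in>F1. c1 b * \<phi> b n)"
    using g(1) unfolding I_def by (rule idlE)
  define d where "d = (\<lambda>a. SOME d. \<phi> a n = d * g)"
  have dprop: "\<phi> a n = d a * g" if "a \<in> K" for a
  proof -
    have "\<phi> a n = (\<Sum>b\<in>{a}. 1 * \<phi> b n)" by simp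
    then have "\<phi> a n \<in> I" unfolding I_def by (rule idlI[rotated 2]) (use that in auto)
    then have "\<exists>d. \<phi> a n = d * g" using g(2) by blast
    then show ?thesis unfolding d_def by (rule someI_ex)
  qed
  define G where "G = (\<lambda>j. \<Sum>b\<in>F1. c1 b * \<phi> b j)"
  define \<psi> where "\<psi> = (\<lambda>a j. \<phi> a j - d a * G j)"
  have "\<exists>F. finite F \<and> F \<subseteq> K \<and> (\<forall>a\<in>K. \<exists>c. \<forall>j<n. \<psi> a j = (\<Sum>b\<in>F. c b * \<psi> b j))"
    by (rule Suc.IH)
  then obtain F2 where F2: "finite F2" "F2 \<subseteq> K" "\<forall>a\<in>K. \<exists>e. \<forall>j<n. \<psi> a j = (\<Sum>b\<in>F2. e b * \<psi> b j)"
    by blast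
  have "\<forall>a\<in>K. \<exists>c. \<forall>j<Suc n. \<phi> a j = (\<Sum>b\<in>F1\<union>F2. c b * \<phi> b j)"
  proof
    fix a assume a: "a \<in> K"
    have "\<exists>e. \<forall>j<n. \<psi> a j = (\<Sum>b\<in>F2. e b * \<psi> b j)" using F2(3) a by (rule bspec)
    then obtain e where e: "\<forall>j<n. \<psi> a j = (\<Sum>b\<in>F2. e b * \<psi> b j)" by blast
    define D where "D = d a - (\<Sum>b\<in>F2. e b * d b)"
    have main: "\<phi> a j = (\<Sum>b\<in>F2. e b * \<phi> b j) + D * G j" if j: "j < Suc n" for j
    proof (cases "j < n")
      case True
      have "\<phi> a j = \<psi> a j + d a * G j" unfolding \<psi>_def by simp
      also have "\<psi> a j = (\<Sum>b\<in>F2. e b * \<psi> b j)" using e True by blast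
      also have "\<dots> = (\<Sum>b\<in>F2. e b * \<phi> b j) - (\<Sum>b\<in>F2. e b * d b) * G j"
        unfolding \<psi>_def by (simp add: right_diff_distrib sum_subtractf sum_distrib_right mult.assoc)
      finally show ?thesis unfolding D_def by (simp add: algebra_simps)
    next
      case False
      then have jn: "j = n" using j by simp
      have Gn: "G n = g" unfolding G_def F1(3) ..
      have "(\<Sum>b\<in>F2. e b * \<phi> b n) = (\<Sum>b\<in>F2. e b * d b) * g"
        unfolding sum_distrib_right
        by (rule sum.cong) (use dprop F2(2) in \<open>auto simp: mult.assoc\<close>)
      then show ?thesis unfolding jn Gn D_def using dprop[OF a] by (simp add: algebra_simps)
    qed
    have merge: "(\<Sum>b\<in>F2. e b * \<phi> b j) + D * G j =
       (\<Sum>b\<in>F1\<union>F2. ((if b\<in>F2 then e b else 0) + (if b\<in>F1 then D * c1 b else 0)) * \<phi> b j)" for j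
    proof -
      have "D * G j = (\<Sum>b\<in>F1. (D * c1 b) * \<phi> b j)"
        unfolding G_def by (simp add: sum_distrib_left mult.assoc)
      then show ?thesis using comb_merge[OF F2(1) F1(1), of e "\<lambda>b. \<phi> b j" "\<lambda>b. D * c1 b"]
        by (simp add: Un_commute)
    qed
    show "\<exists>c. \<forall>j<Suc n. \<phi> a j = (\<Sum>b\<in>F1\<union>F2. c b * \<phi> b j)"
    proof (intro exI allI impI)
      fix j assume "j < Suc n"
      then show "\<phi> a j = (\<Sum>b\<in>F1\<union>F2. ((if b\<in>F2 then e b else 0) + (if b\<in>F1 then D * c1 b else 0)) * \<phi> b j)"
        using main merge by simp
    qed
  qed
  moreover have "finite (F1 \<union> F2)" "F1 \<union> F2 \<subseteq> K" using F1 F2 by auto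
  ultimately show ?case by blast
qed


fun msum :: "('a, 'm) lmod \<Rightarrow> (nat \<Rightarrow> 'm) \<Rightarrow> nat \<Rightarrow> 'm" where
  "msum M f 0 = mzero M"
| "msum M f (Suc n) = madd M (msum M f n) (f n)"

lemma msum_cong: "(\<And>i. i < n \<Longrightarrow> f i = g i) \<Longrightarrow> msum M f n = msum M g n"
  by (induction n) auto

locale lmodule =
  fixes M :: "('a::ring_1, 'm) lmod"
  assumes lm: "left_module M"
begin

lemma ac: "abelian_carrier M" using lm unfolding left_module_def by blast
lemma zero_in[simp]: "mzero M \<in> mcarrier M" using ac unfolding abelian_carrier_def by blast
lemma add_in[simp]: "x \<in> mcarrier M \<Longrightarrow> y \<in> mcarrier M \<Longrightarrow> madd M x y \<in> mcarrier M"
  using ac unfolding abelian_carrier_def by blast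
lemma assoc: "x \<in> mcarrier M \<Longrightarrow> y \<in> mcarrier M \<Longrightarrow> z \<in> mcarrier M \<Longrightarrow>
  madd M (madd M x y) z = madd M x (madd M y z)"
  using ac unfolding abelian_carrier_def by blast
lemma comm: "x \<in> mcarrier M \<Longrightarrow> y \<in> mcarrier M \<Longrightarrow> madd M x y = madd M y x"
  using ac unfolding abelian_carrier_def by blast
lemma lzero[simp]: "x \<in> mcarrier M \<Longrightarrow> madd M (mzero M) x = x"
  using ac unfolding abelian_carrier_def by blast
lemma rzero[simp]: "x \<in> mcarrier M \<Longrightarrow> madd M x (mzero M) = x"
  using lzero comm zero_in by metis
lemma inv_ex: "x \<in> mcarrier M \<Longrightarrow> \<exists>y\<in>mcarrier M. madd M x y = mzero M"
  using ac unfolding abelian_carrier_def by blast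
lemma smult_in[simp]: "x \<in> mcarrier M \<Longrightarrow> msmult M r x \<in> mcarrier M"
  using lm unfolding left_module_def by blast
lemma smult_assoc: "x \<in> mcarrier M \<Longrightarrow> msmult M (r * s) x = msmult M r (msmult M s x)"
  using lm unfolding left_module_def by blast
lemma smult_one[simp]: "x \<in> mcarrier M \<Longrightarrow> msmult M 1 x = x"
  using lm unfolding left_module_def by blast
lemma smult_distr: "x \<in> mcarrier M \<Longrightarrow> msmult M (r + s) x = madd M (msmult M r x) (msmult M s x)"
  using lm unfolding left_module_def by blast
lemma smult_distl: "x \<in> mcarrier M \<Longrightarrow> y \<in> mcarrier M \<Longrightarrow>
   msmult M r (madd M x y) = madd M (msmult M r x) (msmult M r y)"
  using lm unfolding left_module_def by blast

lemma cancel: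
  assumes "x \<in> mcarrier M" "y \<in> mcarrier M" "z \<in> mcarrier M" "madd M x y = madd M x z"
  shows "y = z"
proof -
  obtain x' where x': "x' \<in> mcarrier M" "madd M x x' = mzero M" using inv_ex assms(1) by blast
  have x'': "madd M x' x = mzero M" using x' comm assms(1) by simp
  have "y = madd M (madd M x' x) y" using x'' assms by simp
  also have "\<dots> = madd M x' (madd M x y)" using assoc x' assms by simp
  also have "\<dots> = madd M x' (madd M x z)" using assms by simp
  also have "\<dots> = madd M (madd M x' x) z" using assoc x' assms by simp
  also have "\<dots> = z" using x'' assms by simp
  finally show ?thesis .
qed

lemma cancel0:
  assumes "x \<in> mcarrier M" "y \<in> mcarrier M" "madd M x y = x"
  shows "y = mzero M"
  using cancel[OF assms(1,2) zero_in] assms by simp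

lemma smult_zero[simp]: "msmult M r (mzero M) = mzero M"
proof -
  have "madd M (msmult M r (mzero M)) (msmult M r (mzero M)) = msmult M r (mzero M)"
    using smult_distl[of "mzero M" "mzero M" r] by simp
  then show ?thesis using cancel0[of "msmult M r (mzero M)" "msmult M r (mzero M)"] by simp
qed

lemma zero_smult[simp]: "x \<in> mcarrier M \<Longrightarrow> msmult M 0 x = mzero M"
proof -
  assume x: "x \<in> mcarrier M"
  have "madd M (msmult M 0 x) (msmult M 0 x) = msmult M 0 x"
    using smult_distr[OF x, of 0 0] by simp
  then show ?thesis using cancel0[of "msmult M 0 x" "msmult M 0 x"] x by simp
qed

lemma swap4:
  assumes "a \<in> mcarrier M" "b \<in> mcarrier M" "c \<in> mcarrier M" "d \<in> mcarrier M"
  shows "madd M (madd M a b) (madd M c d) = madd M (madd M a c) (madd M b d)"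
proof -
  have "madd M (madd M a b) (madd M c d) = madd M a (madd M b (madd M c d))" using assoc assms by simp
  also have "madd M b (madd M c d) = madd M (madd M b c) d" using assoc assms by simp
  also have "madd M b c = madd M c b" using comm assms by simp
  also have "madd M (madd M c b) d = madd M c (madd M b d)" using assoc assms by simp
  also have "madd M a (madd M c (madd M b d)) = madd M (madd M a c) (madd M b d)" using assoc assms by simp
  finally show ?thesis .
qed

lemma msum_in[simp]: "(\<And>i. i < n \<Longrightarrow> f i \<in> mcarrier M) \<Longrightarrow> msum M f n \<in> mcarrier M"
  by (induction n) auto

lemma msum_add:
  assumes "\<And>i. i < n \<Longrightarrow> f i \<in> mcarrier M" "\<And>i. i < n \<Longrightarrow> g i \<in> mcarrier M"
  shows "msum M (\<lambda>i. madd M (f i) (g i)) n = madd M (msum M f n) (msum M g n)"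
  using assms
proof (induction n)
  case 0 then show ?case by simp
next
  case (Suc n)
  then show ?case by (simp add: swap4)
qed

lemma msum_smult:
  assumes "\<And>i. i < n \<Longrightarrow> f i \<in> mcarrier M"
  shows "msum M (\<lambda>i. msmult M r (f i)) n = msmult M r (msum M f n)"
  using assms by (induction n) (auto simp: smult_distl)

lemma msum_zero: "msum M (\<lambda>i. mzero M) n = mzero M"
  by (induction n) auto

lemma msum_single:
  assumes "y \<in> mcarrier M"
  shows "msum M (\<lambda>i. if i = k then y else mzero M) n = (if k < n then y else mzero M)"
  using assms by (induction n) auto

end


locale fgmod = lmodule M for M :: "('a::ring_1, 'm) lmod" +
  fixes xs :: "nat \<Rightarrow> 'm" and n :: nat
  assumes xs_in: "\<And>j. j < n \<Longrightarrow> xs j \<in> mcarrier M"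
begin

definition lin :: "(nat \<Rightarrow> 'a) \<Rightarrow> 'm" where
  "lin a = msum M (\<lambda>j. msmult M (a j) (xs j)) n"

lemma lin_in[simp]: "lin a \<in> mcarrier M"
  unfolding lin_def by (rule msum_in) (simp add: xs_in)

lemma lin_cong: "(\<And>j. j < n \<Longrightarrow> a j = b j) \<Longrightarrow> lin a = lin b"
  unfolding lin_def by (rule msum_cong) simp

lemma lin_add: "lin (\<lambda>j. a j + b j) = madd M (lin a) (lin b)"
proof -
  have "lin (\<lambda>j. a j + b j) = msum M (\<lambda>j. madd M (msmult M (a j) (xs j)) (msmult M (b j) (xs j))) n"
    unfolding lin_def by (rule msum_cong) (simp add: smult_distr xs_in)
  also have "\<dots> = madd M (lin a) (lin b)" unfolding lin_def by (rule msum_add) (simp_all add: xs_in)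
  finally show ?thesis .
qed

lemma lin_smult: "lin (\<lambda>j. r * a j) = msmult M r (lin a)"
proof -
  have "lin (\<lambda>j. r * a j) = msum M (\<lambda>j. msmult M r (msmult M (a j) (xs j))) n"
    unfolding lin_def by (rule msum_cong) (simp add: smult_assoc xs_in)
  also have "\<dots> = msmult M r (lin a)" unfolding lin_def by (rule msum_smult) (simp add: xs_in)
  finally show ?thesis .
qed

lemma lin_zero: "lin (\<lambda>j. 0) = mzero M"
proof -
  have "lin (\<lambda>j. 0) = msum M (\<lambda>j. mzero M) n"
    unfolding lin_def by (rule msum_cong) (simp add: xs_in)
  then show ?thesis using msum_zero by simp
qed

lemma lin_diff0:
  assumes "lin a = lin b" shows "lin (\<lambda>j. a j - b j) = mzero M"
proof -
  have "madd M (lin b) (lin (\<lambda>j. a j - b j)) = lin (\<lambda>j. (a j - b j) + b j)"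
    using lin_add[of "\<lambda>j. a j - b j" b] comm by simp
  also have "\<dots> = lin b" using assms by simp
  finally show ?thesis using cancel0[of "lin b" "lin (\<lambda>j. a j - b j)"] by simp
qed

lemma lin_diffK:
  assumes "lin b = mzero M" shows "lin (\<lambda>j. a j - b j) = lin a"
proof -
  have "lin a = lin (\<lambda>j. (a j - b j) + b j)" by simp
  also have "\<dots> = lin (\<lambda>j. a j - b j)" using lin_add[of "\<lambda>j. a j - b j" b] assms by simp
  finally show ?thesis by simp
qed

lemma lin_unit: "k < n \<Longrightarrow> lin (\<lambda>j. if j = k then 1 else 0) = xs k"
proof -
  assume k: "k < n"
  have "lin (\<lambda>j. if j = k then 1 else 0) = msum M (\<lambda>j. if j = k then xs k else mzero M) n"
    unfolding lin_def by (rule msum_cong) (simp add: xs_in)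
  also have "\<dots> = xs k" using msum_single[OF xs_in[OF k]] k by simp
  finally show ?thesis .
qed

lemma lin_sumvec:
  fixes p :: nat and v :: "nat \<Rightarrow> nat \<Rightarrow> 'a"
  assumes "\<And>i. i < p \<Longrightarrow> lin (v i) = mzero M"
  shows "lin (\<lambda>j. \<Sum>i<p. c i * v i j) = mzero M"
  using assms
proof (induction p)
  case 0 then show ?case using lin_zero by simp
next
  case (Suc p)
  have "lin (\<lambda>j. \<Sum>i<Suc p. c i * v i j) = lin (\<lambda>j. (\<Sum>i<p. c i * v i j) + c p * v p j)" by simp
  also have "\<dots> = madd M (lin (\<lambda>j. \<Sum>i<p. c i * v i j)) (lin (\<lambda>j. c p * v p j))" by (rule lin_add)
  also have "\<dots> = mzero M" using Suc lin_smult[of "c p" "v p"] by simp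
  finally show ?case .
qed

end


lemma tr_gen: "g \<in> tensor_gens N M \<Longrightarrow> g \<in> tensor_rel N M"
  using tensor_rel.add[OF tensor_rel.zero, of g] by simp

lemma tr_add2: "g \<in> tensor_rel N M \<Longrightarrow> f \<in> tensor_rel N M \<Longrightarrow> (\<lambda>q. f q + g q) \<in> tensor_rel N M"
proof (induction g rule: tensor_rel.induct)
  case zero then show ?case by simp
next
  case (add g h)
  have "(\<lambda>q. f q + (g q + h q)) = (\<lambda>q. (\<lambda>q. f q + g q) q + h q)" by (simp add: add.assoc)
  then show ?case using tensor_rel.add[OF add.IH[OF add.prems] add.hyps(2)] by simp
next
  case (sub g h)
  have "(\<lambda>q. f q + (g q - h q)) = (\<lambda>q. (\<lambda>q. f q + g q) q - h q)" by (simp add: algebra_simps)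
  then show ?case using tensor_rel.sub[OF sub.IH[OF sub.prems] sub.hyps(2)] by simp
qed

lemma tr_neg: "f \<in> tensor_rel N M \<Longrightarrow> (\<lambda>q. - f q) \<in> tensor_rel N M"
proof (induction f rule: tensor_rel.induct)
  case zero then show ?case using tensor_rel.zero by simp
next
  case (add g h)
  have "(\<lambda>q. - (g q + h q)) = (\<lambda>q. (\<lambda>q. - g q) q - h q)" by simp
  then show ?case using tensor_rel.sub[OF add.IH add.hyps(2)] by simp
next
  case (sub g h)
  have "(\<lambda>q. - (g q - h q)) = (\<lambda>q. (\<lambda>q. - g q) q + h q)" by simp
  then show ?case using tensor_rel.add[OF sub.IH sub.hyps(2)] by simp
qed

definition teq :: "('a, 'n) lmod \<Rightarrow> ('a, 'm) lmod \<Rightarrow> ('n \<times> 'm \<Rightarrow> int) \<Rightarrow> ('n \<times> 'm \<Rightarrow> int) \<Rightarrow> bool" where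
  "teq N M f g \<longleftrightarrow> (\<lambda>q. f q - g q) \<in> tensor_rel N M"

lemma teq_refl: "teq N M f f"
  unfolding teq_def using tensor_rel.zero by simp

lemma teq_sym: "teq N M f g \<Longrightarrow> teq N M g f"
  unfolding teq_def using tr_neg by fastforce

lemma teq_trans: "teq N M f g \<Longrightarrow> teq N M g h \<Longrightarrow> teq N M f h"
  unfolding teq_def using tr_add2[of "\<lambda>q. g q - h q" N M "\<lambda>q. f q - g q"] by simp

lemma teq_add: "teq N M f g \<Longrightarrow> teq N M f' g' \<Longrightarrow> teq N M (\<lambda>q. f q + f' q) (\<lambda>q. g q + g' q)"
  unfolding teq_def using tr_add2[of "\<lambda>q. f' q - g' q" N M "\<lambda>q. f q - g q"]
  by (simp add: algebra_simps)

lemma teq_sum: fixes p :: nat shows "(\<And>i. i < p \<Longrightarrow> teq N M (f i) (g i)) \<Longrightarrow>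
   teq N M (\<lambda>q. \<Sum>i<p. f i q) (\<lambda>q. \<Sum>i<p. g i q)"
proof (induction p)
  case 0 then show ?case using teq_refl by simp
next
  case (Suc p)
  then show ?case using teq_add[of N M "\<lambda>q. \<Sum>i<p. f i q" "\<lambda>q. \<Sum>i<p. g i q" "f p" "g p"] by simp
qed

lemma teq_zero_mem: "teq N M f (\<lambda>q. 0) \<Longrightarrow> f \<in> tensor_rel N M"
  unfolding teq_def by simp

lemma teq_addL:
  assumes "n \<in> mcarrier N" "n' \<in> mcarrier N" "m \<in> mcarrier M"
  shows "teq N M (delta (madd N n n', m)) (\<lambda>q. delta (n, m) q + delta (n', m) q)"
proof -
  have "(\<lambda>q. delta (madd N n n', m) q - delta (n, m) q - delta (n', m) q) \<in> tensor_gens N M"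
    unfolding tensor_gens_def using assms by blast
  then show ?thesis unfolding teq_def using tr_gen by (simp add: diff_diff_eq)
qed

lemma teq_addR:
  assumes "n \<in> mcarrier N" "m \<in> mcarrier M" "m' \<in> mcarrier M"
  shows "teq N M (delta (n, madd M m m')) (\<lambda>q. delta (n, m) q + delta (n, m') q)"
proof -
  have "(\<lambda>q. delta (n, madd M m m') q - delta (n, m) q - delta (n, m') q) \<in> tensor_gens N M"
    unfolding tensor_gens_def using assms by blast
  then show ?thesis unfolding teq_def using tr_gen by (simp add: diff_diff_eq)
qed

lemma teq_bal:
  assumes "n \<in> mcarrier N" "m \<in> mcarrier M"
  shows "teq N M (delta (msmult N r n, m)) (delta (n, msmult M r m))"
proof -
  have "(\<lambda>q. delta (msmult N r n, m) q - delta (n, msmult M r m) q) \<in> tensor_gens N M"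
    unfolding tensor_gens_def using assms by blast
  then show ?thesis unfolding teq_def by (rule tr_gen)
qed


lemma teq_double_zero:
  assumes "teq N M f (\<lambda>q. f q + f q)" shows "teq N M f (\<lambda>q. 0)"
proof -
  have "(\<lambda>q. - (f q - (f q + f q))) \<in> tensor_rel N M" using assms tr_neg unfolding teq_def by blast
  then show ?thesis unfolding teq_def by simp
qed

context lmodule
begin

lemma teq_zeroR: "n \<in> mcarrier N \<Longrightarrow> teq N M (delta (n, mzero M)) (\<lambda>q. 0)"
proof -
  assume n: "n \<in> mcarrier N"
  have "teq N M (delta (n, mzero M)) (\<lambda>q. delta (n, mzero M) q + delta (n, mzero M) q)"
    using teq_addR[OF n, of "mzero M" M "mzero M"] by simp
  then show ?thesis by (rule teq_double_zero)
qed

lemma teq_sumR: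
  fixes p :: nat
  assumes "n \<in> mcarrier N" "\<And>i. i < p \<Longrightarrow> g i \<in> mcarrier M"
  shows "teq N M (delta (n, msum M g p)) (\<lambda>q. \<Sum>i<p. delta (n, g i) q)"
  using assms(2)
proof (induction p)
  case 0 then show ?case using teq_zeroR[OF assms(1)] by simp
next
  case (Suc p)
  have "teq N M (delta (n, msum M g (Suc p))) (\<lambda>q. delta (n, msum M g p) q + delta (n, g p) q)"
    using teq_addR[OF assms(1), of "msum M g p" M "g p"] Suc.prems by simp
  moreover have "teq N M (\<lambda>q. delta (n, msum M g p) q + delta (n, g p) q)
      (\<lambda>q. (\<Sum>i<p. delta (n, g i) q) + delta (n, g p) q)"
    using teq_add[OF Suc.IH teq_refl] Suc.prems by simp
  ultimately show ?case using teq_trans by simp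
qed

end

lemma teq_sumL:
  fixes p :: nat
  assumes z: "mzero N \<in> mcarrier N" and zz: "madd N (mzero N) (mzero N) = mzero N"
    and cl: "\<And>x y. x \<in> mcarrier N \<Longrightarrow> y \<in> mcarrier N \<Longrightarrow> madd N x y \<in> mcarrier N"
    and m: "m \<in> mcarrier M"
    and f: "\<And>i. i < p \<Longrightarrow> f i \<in> mcarrier N"
  shows "teq N M (delta (msum N f p, m)) (\<lambda>q. \<Sum>i<p. delta (f i, m) q)"
  using f
proof (induction p)
  case 0
  have "teq N M (delta (mzero N, m)) (\<lambda>q. delta (mzero N, m) q + delta (mzero N, m) q)"
    using teq_addL[OF z z m] zz by simp
  then have "teq N M (delta (mzero N, m)) (\<lambda>q. 0)" by (rule teq_double_zero)
  then show ?case by simp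
next
  case (Suc p)
  have inN: "msum N f p \<in> mcarrier N" using Suc.prems
  proof (induction p)
    case 0 then show ?case using z by simp
  next
    case (Suc p) then show ?case using cl by simp
  qed
  have "teq N M (delta (msum N f (Suc p), m)) (\<lambda>q. delta (msum N f p, m) q + delta (f p, m) q)"
    using teq_addL[OF inN _ m, of "f p"] Suc.prems by simp
  moreover have "teq N M (\<lambda>q. delta (msum N f p, m) q + delta (f p, m) q)
      (\<lambda>q. (\<Sum>i<p. delta (f i, m) q) + delta (f p, m) q)"
    using teq_add[OF Suc.IH teq_refl] Suc.prems by simp
  ultimately show ?case using teq_trans by simp
qed


locale step2 = fgmod M xs n for M :: "('a::ring_1, 'm) lmod" and xs n +
  fixes ks :: "nat \<Rightarrow> nat \<Rightarrow> 'a" and p :: nat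
  assumes ks_K: "\<And>i. i < p \<Longrightarrow> lin (ks i) = mzero M"
begin

definition Nm :: "('a, nat \<Rightarrow> 'a) lmod" where
  "Nm = \<lparr> mcarrier = {v. \<forall>i. p \<le> i \<longrightarrow> v i = 0}, madd = (\<lambda>v w i. v i + w i),
          mzero = (\<lambda>i. 0), msmult = (\<lambda>r v i. v i * r) \<rparr>"

definition Cmap :: "(nat \<Rightarrow> 'a) \<Rightarrow> nat \<Rightarrow> 'a" where
  "Cmap v = (\<lambda>i. if i < p then (\<Sum>j<n. ks i j * v j) else 0)"

definition Nc :: "('a, nat \<Rightarrow> 'a) lmod" where
  "Nc = Nm\<lparr>mcarrier := range Cmap\<rparr>"

definition unitv :: "nat \<Rightarrow> nat \<Rightarrow> 'a" where
  "unitv j = (\<lambda>j'. if j' = j then 1 else 0)"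

definition cc :: "nat \<Rightarrow> nat \<Rightarrow> 'a" where
  "cc j = Cmap (unitv j)"

definition z :: "(nat \<Rightarrow> 'a) \<times> 'm \<Rightarrow> int" where
  "z = (\<lambda>q. \<Sum>j<n. delta (cc j, xs j) q)"

lemma Nm_simps[simp]: "mcarrier Nm = {v. \<forall>i. p \<le> i \<longrightarrow> v i = 0}" "madd Nm = (\<lambda>v w i. v i + w i)"
  "mzero Nm = (\<lambda>i. 0)" "msmult Nm = (\<lambda>r v i. v i * r)"
  unfolding Nm_def by simp_all

lemma Nc_simps[simp]: "mcarrier Nc = range Cmap" "madd Nc = (\<lambda>v w i. v i + w i)"
  "mzero Nc = (\<lambda>i. 0)" "msmult Nc = (\<lambda>r v i. v i * r)"
  unfolding Nc_def by simp_all

lemma Cmap_add: "Cmap (\<lambda>j. v j + w j) = (\<lambda>i. Cmap v i + Cmap w i)"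
  unfolding Cmap_def by (auto simp: distrib_left sum.distrib)

lemma Cmap_diff: "Cmap (\<lambda>j. v j - w j) = (\<lambda>i. Cmap v i - Cmap w i)"
  unfolding Cmap_def by (auto simp: right_diff_distrib sum_subtractf)

lemma Cmap_neg: "Cmap (\<lambda>j. - v j) = (\<lambda>i. - Cmap v i)"
  unfolding Cmap_def by (auto simp: sum_negf)

lemma Cmap_smult: "Cmap (\<lambda>j. v j * r) = (\<lambda>i. Cmap v i * r)"
  unfolding Cmap_def by (auto simp: sum_distrib_right mult.assoc)

lemma Cmap_zero: "Cmap (\<lambda>j. 0) = (\<lambda>i. 0)"
  unfolding Cmap_def by auto

lemma right_module_Nm: "right_module Nm"
  unfolding right_module_def abelian_carrier_def
proof (intro conjI ballI allI)
  fix x assume "x \<in> mcarrier Nm"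
  then show "\<exists>y\<in>mcarrier Nm. madd Nm x y = mzero Nm"
    by (intro bexI[of _ "\<lambda>i. - x i"]) auto
qed (auto simp: algebra_simps)

lemma Cmap_in_Nm: "Cmap v \<in> mcarrier Nm"
  unfolding Cmap_def by simp

lemma right_module_Nc: "right_module Nc"
  unfolding right_module_def abelian_carrier_def
proof (intro conjI ballI allI)
  have "Cmap (\<lambda>j. 0) \<in> range Cmap" by (rule rangeI)
  then show "mzero Nc \<in> mcarrier Nc" using Cmap_zero by simp
next
  fix x y assume "x \<in> mcarrier Nc" "y \<in> mcarrier Nc"
  then obtain v w where "x = Cmap v" "y = Cmap w" by auto
  moreover have "Cmap (\<lambda>j. v j + w j) \<in> range Cmap" by (rule rangeI)
  ultimately show "madd Nc x y \<in> mcarrier Nc" using Cmap_add[of v w] by simp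
next
  fix x r assume "x \<in> mcarrier Nc"
  then obtain v where "x = Cmap v" by auto
  moreover have "Cmap (\<lambda>j. v j * r) \<in> range Cmap" by (rule rangeI)
  ultimately show "msmult Nc r x \<in> mcarrier Nc" using Cmap_smult[of v r] by simp
next
  fix x assume "x \<in> mcarrier Nc"
  then obtain v where v: "x = Cmap v" by auto
  show "\<exists>y\<in>mcarrier Nc. madd Nc x y = mzero Nc"
  proof (intro bexI)
    show "Cmap (\<lambda>j. - v j) \<in> mcarrier Nc" by simp
    show "madd Nc x (Cmap (\<lambda>j. - v j)) = mzero Nc" unfolding v Cmap_neg by simp
  qed
qed (auto simp: algebra_simps)

lemma range_Cmap_sub: "range Cmap \<subseteq> mcarrier Nm"
  using Cmap_in_Nm by auto

lemma Nc_eq: "Nc = Nm\<lparr>mcarrier := range Cmap\<rparr>" by (rule Nc_def)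

end


context step2
begin

lemma msum_Nm: "msum Nm f k = (\<lambda>t. \<Sum>i<k. f i t)"
  by (induction k) auto

lemma unitv_Nm: "i < p \<Longrightarrow> unitv i \<in> mcarrier Nm"
  unfolding unitv_def by auto

lemma cc_eq: "j < n \<Longrightarrow> cc j = msum Nm (\<lambda>i. msmult Nm (ks i j) (unitv i)) p"
proof -
  assume j: "j < n"
  have "cc j t = (\<Sum>i<p. unitv i t * ks i j)" for t
  proof -
    have "(\<Sum>i<p. unitv i t * ks i j) = (\<Sum>i<p. if t = i then ks i j else 0)"
      unfolding unitv_def by (rule sum.cong) auto
    also have "\<dots> = (if t < p then ks t j else 0)" by (simp add: sum.delta)
    also have "\<dots> = cc j t"
    proof -
      have "(\<Sum>j'<n. ks t j' * unitv j j') = (\<Sum>j'<n. if j' = j then ks t j' else 0)"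
        unfolding unitv_def by (rule sum.cong) auto
      also have "\<dots> = ks t j" using j by (simp add: sum.delta')
      finally show ?thesis unfolding cc_def Cmap_def by simp
    qed
    finally show ?thesis by simp
  qed
  then show ?thesis unfolding msum_Nm by auto
qed

lemma z_rel: "z \<in> tensor_rel Nm M"
proof -
  have s1: "teq Nm M z (\<lambda>q. \<Sum>j<n. (\<Sum>i<p. delta (msmult Nm (ks i j) (unitv i), xs j) q))"
    unfolding z_def
  proof (rule teq_sum)
    fix j assume j: "j < n"
    show "teq Nm M (delta (cc j, xs j)) (\<lambda>q. \<Sum>i<p. delta (msmult Nm (ks i j) (unitv i), xs j) q)"
      unfolding cc_eq[OF j]
      by (rule teq_sumL) (auto simp: xs_in[OF j] unitv_def)
  qed
  have s2: "teq Nm M (\<lambda>q. \<Sum>j<n. (\<Sum>i<p. delta (msmult Nm (ks i j) (unitv i), xs j) q))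
       (\<lambda>q. \<Sum>j<n. (\<Sum>i<p. delta (unitv i, msmult M (ks i j) (xs j)) q))"
  proof (rule teq_sum)
    fix j assume j: "j < n"
    show "teq Nm M (\<lambda>q. \<Sum>i<p. delta (msmult Nm (ks i j) (unitv i), xs j) q)
       (\<lambda>q. \<Sum>i<p. delta (unitv i, msmult M (ks i j) (xs j)) q)"
    proof (rule teq_sum)
      fix i assume i: "i < p"
      show "teq Nm M (delta (msmult Nm (ks i j) (unitv i), xs j)) (delta (unitv i, msmult M (ks i j) (xs j)))"
        by (rule teq_bal) (use unitv_Nm[OF i] xs_in[OF j] in auto)
    qed
  qed
  have s3: "(\<lambda>q. \<Sum>j<n. (\<Sum>i<p. delta (unitv i, msmult M (ks i j) (xs j)) q))
      = (\<lambda>q. \<Sum>i<p. (\<Sum>j<n. delta (unitv i, msmult M (ks i j) (xs j)) q))"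
    by (rule ext) (rule sum.swap)
  have s4: "teq Nm M (\<lambda>q. \<Sum>i<p. (\<Sum>j<n. delta (unitv i, msmult M (ks i j) (xs j)) q))
     (\<lambda>q. \<Sum>i<p. delta (unitv i, lin (ks i)) q)"
  proof (rule teq_sum)
    fix i assume i: "i < p"
    show "teq Nm M (\<lambda>q. \<Sum>j<n. delta (unitv i, msmult M (ks i j) (xs j)) q) (delta (unitv i, lin (ks i)))"
      unfolding lin_def by (rule teq_sym, rule teq_sumR) (use unitv_Nm[OF i] xs_in in auto)
  qed
  have s5: "(\<lambda>q. \<Sum>i<p. delta (unitv i, lin (ks i)) q) = (\<lambda>q. \<Sum>i<p. delta (unitv i, mzero M) q)"
    using ks_K by (auto intro!: ext sum.cong)
  have s6: "teq Nm M (\<lambda>q. \<Sum>i<p. delta (unitv i, mzero M) q) (\<lambda>q. \<Sum>i<p. (\<lambda>q. 0) q)"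
    by (rule teq_sum) (rule teq_zeroR, rule unitv_Nm)
  have "teq Nm M z (\<lambda>q. 0)"
    using teq_trans[OF teq_trans[OF teq_trans[OF s1 s2] s4[folded s3]] s6[folded s5]] by simp
  then show ?thesis by (rule teq_zero_mem)
qed

end


definition PsiW :: "('p \<Rightarrow> 'a::ring_1) \<Rightarrow> ('p \<Rightarrow> int) \<Rightarrow> 'a" where
  "PsiW w f = (\<Sum>q\<in>{q. f q \<noteq> 0}. of_int (f q) * w q)"

lemma PsiW_super:
  assumes "finite S" "{q. f q \<noteq> 0} \<subseteq> S"
  shows "PsiW w f = (\<Sum>q\<in>S. of_int (f q) * w q)"
  unfolding PsiW_def by (rule sum.mono_neutral_cong_left) (use assms in auto)

lemma PsiW_add:
  assumes "finite {q. f q \<noteq> 0}" "finite {q. g q \<noteq> 0}"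
  shows "PsiW w (\<lambda>q. f q + g q) = PsiW w f + PsiW w g"
proof -
  let ?S = "{q. f q \<noteq> 0} \<union> {q. g q \<noteq> 0}"
  have "PsiW w (\<lambda>q. f q + g q) = (\<Sum>q\<in>?S. of_int (f q + g q) * w q)"
    by (rule PsiW_super) (use assms in auto)
  also have "\<dots> = (\<Sum>q\<in>?S. of_int (f q) * w q) + (\<Sum>q\<in>?S. of_int (g q) * w q)"
    by (simp add: distrib_right sum.distrib)
  also have "\<dots> = PsiW w f + PsiW w g"
    using PsiW_super[of ?S f w] PsiW_super[of ?S g w] assms by auto
  finally show ?thesis .
qed

lemma PsiW_diff:
  assumes "finite {q. f q \<noteq> 0}" "finite {q. g q \<noteq> 0}"
  shows "PsiW w (\<lambda>q. f q - g q) = PsiW w f - PsiW w g"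
proof -
  let ?S = "{q. f q \<noteq> 0} \<union> {q. g q \<noteq> 0}"
  have "PsiW w (\<lambda>q. f q - g q) = (\<Sum>q\<in>?S. of_int (f q - g q) * w q)"
    by (rule PsiW_super) (use assms in auto)
  also have "\<dots> = (\<Sum>q\<in>?S. of_int (f q) * w q) - (\<Sum>q\<in>?S. of_int (g q) * w q)"
    by (simp add: left_diff_distrib sum_subtractf)
  also have "\<dots> = PsiW w f - PsiW w g"
    using PsiW_super[of ?S f w] PsiW_super[of ?S g w] assms by auto
  finally show ?thesis .
qed

lemma delta_supp: "{q. delta a q \<noteq> 0} = {a}"
  unfolding delta_def by auto

lemma PsiW_delta: "PsiW w (delta a) = w a"
  unfolding PsiW_def delta_supp by (simp add: delta_def)

lemma PsiW_zero: "PsiW w (\<lambda>q. 0) = 0"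
  unfolding PsiW_def by simp

lemma finite_supp_diff: "finite {q. f q \<noteq> 0} \<Longrightarrow> finite {q. g q \<noteq> (0::int)} \<Longrightarrow>
   finite {q. f q - g q \<noteq> 0}"
  by (rule finite_subset[of _ "{q. f q \<noteq> 0} \<union> {q. g q \<noteq> 0}"]) auto

lemma finite_supp_add: "finite {q. f q \<noteq> 0} \<Longrightarrow> finite {q. g q \<noteq> (0::int)} \<Longrightarrow>
   finite {q. f q + g q \<noteq> 0}"
  by (rule finite_subset[of _ "{q. f q \<noteq> 0} \<union> {q. g q \<noteq> 0}"]) auto

lemma finite_delta: "finite {q. delta a q \<noteq> 0}"
  unfolding delta_supp by simp

lemma PsiW_gen3: "PsiW w (\<lambda>q. delta a q - delta b q - delta c q) = w a - w b - w c"
proof -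
  have f: "finite {q. delta a q - delta b q \<noteq> 0}" by (rule finite_supp_diff[OF finite_delta finite_delta])
  have "PsiW w (\<lambda>q. delta a q - delta b q - delta c q) = PsiW w (\<lambda>q. delta a q - delta b q) - PsiW w (delta c)"
    by (rule PsiW_diff[OF f finite_delta])
  also have "PsiW w (\<lambda>q. delta a q - delta b q) = PsiW w (delta a) - PsiW w (delta b)"
    by (rule PsiW_diff[OF finite_delta finite_delta])
  finally show ?thesis by (simp add: PsiW_delta)
qed

lemma PsiW_gen2: "PsiW w (\<lambda>q. delta a q - delta b q) = w a - w b"
proof -
  have "PsiW w (\<lambda>q. delta a q - delta b q) = PsiW w (delta a) - PsiW w (delta b)"
    by (rule PsiW_diff[OF finite_delta finite_delta])
  then show ?thesis by (simp add: PsiW_delta)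
qed

lemma gens_finite: "g \<in> tensor_gens N M \<Longrightarrow> finite {q. g q \<noteq> 0}"
  unfolding tensor_gens_def
  by (auto intro!: finite_supp_diff finite_delta)

lemma tr_finite: "f \<in> tensor_rel N M \<Longrightarrow> finite {q. f q \<noteq> 0}"
proof (induction rule: tensor_rel.induct)
  case zero then show ?case by simp
next
  case (add f g) then show ?case using finite_supp_add[OF add.IH gens_finite[OF add.hyps(2)]] by simp
next
  case (sub f g) show ?case by (rule finite_supp_diff[OF sub.IH gens_finite[OF sub.hyps(2)]])
qed

lemma PsiW_sumdelta:
  fixes N :: nat
  shows "PsiW w (\<lambda>q. \<Sum>k<N. delta (a k) q) = (\<Sum>k<N. w (a k))"
proof (induction N)
  case 0 then show ?case by (simp add: PsiW_zero)
next
  case (Suc N)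
  have fin: "finite {q. (\<Sum>k<N. delta (a k) q) \<noteq> 0}"
  proof (rule finite_subset[of _ "a ` {..<N}"])
    show "{q. (\<Sum>k<N. delta (a k) q) \<noteq> 0} \<subseteq> a ` {..<N}"
    proof
      fix q assume "q \<in> {q. (\<Sum>k<N. delta (a k) q) \<noteq> 0}"
      then obtain k where "k < N" "delta (a k) q \<noteq> 0" by (metis (mono_tags, lifting) lessThan_iff mem_Collect_eq sum.neutral)
      then show "q \<in> a ` {..<N}" unfolding delta_def by (auto split: if_splits)
    qed
  qed simp
  have "PsiW w (\<lambda>q. \<Sum>k<Suc N. delta (a k) q) = PsiW w (\<lambda>q. (\<Sum>k<N. delta (a k) q) + delta (a N) q)"
    by simp
  also have "\<dots> = PsiW w (\<lambda>q. \<Sum>k<N. delta (a k) q) + PsiW w (delta (a N))"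
    by (rule PsiW_add[OF fin finite_delta])
  finally show ?case using Suc PsiW_delta by simp
qed


locale step3 = step2 M xs n ks p for M :: "('a::ring_1, 'm) lmod" and xs n ks p +
  assumes xs_inj: "inj_on xs {..<n}"
    and span: "\<And>m. m \<in> mcarrier M \<Longrightarrow> \<exists>a. lin a = m"
begin

definition lam :: "(nat \<Rightarrow> 'a) \<Rightarrow> nat \<Rightarrow> 'a" where
  "lam c = (SOME v. Cmap v = c)"

definition idx :: "'m \<Rightarrow> nat" where
  "idx m = (THE j. j < n \<and> xs j = m)"

definition mu :: "'m \<Rightarrow> nat \<Rightarrow> 'a" where
  "mu m = (if m \<in> xs ` {..<n} then unitv (idx m) else (SOME a. lin a = m))"

definition Psi :: "((nat \<Rightarrow> 'a) \<times> 'm \<Rightarrow> int) \<Rightarrow> nat \<Rightarrow> nat \<Rightarrow> 'a" where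
  "Psi f = (\<lambda>j j'. PsiW (\<lambda>q. lam (fst q) j * mu (snd q) j') f)"

definition Wset :: "(nat \<Rightarrow> nat \<Rightarrow> 'a) set" where
  "Wset = {A. \<exists>B. (\<forall>i<p. \<forall>j'. (\<Sum>j<n. ks i j * B j j') = 0) \<and>
                   (\<forall>j<n. lin (\<lambda>j'. A j j' - B j j') = mzero M)}"

lemma lam_prop: "c \<in> range Cmap \<Longrightarrow> Cmap (lam c) = c"
  unfolding lam_def by (metis (mono_tags, lifting) image_iff someI_ex)

lemma idx_xs: "j < n \<Longrightarrow> idx (xs j) = j"
  unfolding idx_def
proof (rule the_equality)
  assume "j < n" then show "j < n \<and> xs j = xs j" by simp
next
  fix j' assume "j < n" "j' < n \<and> xs j' = xs j"
  then show "j' = j" using xs_inj unfolding inj_on_def by auto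
qed

lemma mu_xs: "j < n \<Longrightarrow> mu (xs j) = unitv j"
  unfolding mu_def using idx_xs by auto

lemma lin_unitv: "j < n \<Longrightarrow> lin (unitv j) = xs j"
  unfolding unitv_def by (rule lin_unit)

lemma mu_prop: "m \<in> mcarrier M \<Longrightarrow> lin (mu m) = m"
proof (cases "m \<in> xs ` {..<n}")
  case True
  then obtain j where "j < n" "m = xs j" by auto
  then show ?thesis using mu_xs lin_unitv by simp
next
  case False
  assume "m \<in> mcarrier M"
  then have "\<exists>a. lin a = m" by (rule span)
  then have "lin (SOME a. lin a = m) = m" by (rule someI_ex)
  then show ?thesis unfolding mu_def using False by simp
qed

lemma Wset_zero: "(\<lambda>j j'. 0) \<in> Wset"
  unfolding Wset_def
  by (rule CollectI, rule exI[of _ "\<lambda>j j'. 0"]) (simp add: lin_zero)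

lemma Wset_add:
  assumes "A1 \<in> Wset" "A2 \<in> Wset"
  shows "(\<lambda>j j'. A1 j j' + A2 j j') \<in> Wset"
proof -
  obtain B1 where B1: "\<forall>i<p. \<forall>j'. (\<Sum>j<n. ks i j * B1 j j') = 0" "\<forall>j<n. lin (\<lambda>j'. A1 j j' - B1 j j') = mzero M"
    using assms(1) unfolding Wset_def by blast
  obtain B2 where B2: "\<forall>i<p. \<forall>j'. (\<Sum>j<n. ks i j * B2 j j') = 0" "\<forall>j<n. lin (\<lambda>j'. A2 j j' - B2 j j') = mzero M"
    using assms(2) unfolding Wset_def by blast
  have "\<forall>i<p. \<forall>j'. (\<Sum>j<n. ks i j * (B1 j j' + B2 j j')) = 0"
    using B1(1) B2(1) by (simp add: distrib_left sum.distrib)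
  moreover have "\<forall>j<n. lin (\<lambda>j'. (A1 j j' + A2 j j') - (B1 j j' + B2 j j')) = mzero M"
  proof (intro allI impI)
    fix j assume j: "j < n"
    have "lin (\<lambda>j'. (A1 j j' + A2 j j') - (B1 j j' + B2 j j')) =
          lin (\<lambda>j'. (A1 j j' - B1 j j') + (A2 j j' - B2 j j'))"
      by (simp add: algebra_simps)
    also have "\<dots> = mzero M" using lin_add B1(2) B2(2) j by simp
    finally show "lin (\<lambda>j'. (A1 j j' + A2 j j') - (B1 j j' + B2 j j')) = mzero M" .
  qed
  ultimately show ?thesis unfolding Wset_def by (intro CollectI exI conjI)
qed

lemma Wset_diff:
  assumes "A1 \<in> Wset" "A2 \<in> Wset"
  shows "(\<lambda>j j'. A1 j j' - A2 j j') \<in> Wset"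
proof -
  obtain B1 where B1: "\<forall>i<p. \<forall>j'. (\<Sum>j<n. ks i j * B1 j j') = 0" "\<forall>j<n. lin (\<lambda>j'. A1 j j' - B1 j j') = mzero M"
    using assms(1) unfolding Wset_def by blast
  obtain B2 where B2: "\<forall>i<p. \<forall>j'. (\<Sum>j<n. ks i j * B2 j j') = 0" "\<forall>j<n. lin (\<lambda>j'. A2 j j' - B2 j j') = mzero M"
    using assms(2) unfolding Wset_def by blast
  have "\<forall>i<p. \<forall>j'. (\<Sum>j<n. ks i j * (B1 j j' - B2 j j')) = 0"
    using B1(1) B2(1) by (simp add: right_diff_distrib sum_subtractf)
  moreover have "\<forall>j<n. lin (\<lambda>j'. (A1 j j' - A2 j j') - (B1 j j' - B2 j j')) = mzero M"
  proof (intro allI impI)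
    fix j assume j: "j < n"
    have "lin (\<lambda>j'. (A1 j j' - A2 j j') - (B1 j j' - B2 j j')) =
          lin (\<lambda>j'. (A1 j j' - B1 j j') - (A2 j j' - B2 j j'))"
      by (simp add: algebra_simps)
    also have "\<dots> = mzero M" using lin_diff0 B1(2) B2(2) j by simp
    finally show "lin (\<lambda>j'. (A1 j j' - A2 j j') - (B1 j j' - B2 j j')) = mzero M" .
  qed
  ultimately show ?thesis unfolding Wset_def by (intro CollectI exI conjI)
qed

end


context step3
begin

lemma Cmap0: "Cmap d = (\<lambda>i. 0) \<Longrightarrow> i < p \<Longrightarrow> (\<Sum>j<n. ks i j * d j) = 0"
  unfolding Cmap_def by (drule fun_cong[of _ _ i]) simp

lemma colL: "(\<Sum>j<n. ks i j * d j) = 0 \<Longrightarrow> (\<Sum>j<n. ks i j * (d j * x)) = 0"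
  by (metis (no_types, lifting) mult.assoc mult_zero_left sum.cong sum_distrib_right)

lemma Psi_add:
  assumes "finite {q. f q \<noteq> 0}" "finite {q. g q \<noteq> 0}"
  shows "Psi (\<lambda>q. f q + g q) = (\<lambda>j j'. Psi f j j' + Psi g j j')"
  unfolding Psi_def by (intro ext) (rule PsiW_add[OF assms])

lemma Psi_diff:
  assumes "finite {q. f q \<noteq> 0}" "finite {q. g q \<noteq> 0}"
  shows "Psi (\<lambda>q. f q - g q) = (\<lambda>j j'. Psi f j j' - Psi g j j')"
  unfolding Psi_def by (intro ext) (rule PsiW_diff[OF assms])

lemma Psi_gen1:
  assumes c: "c \<in> range Cmap" and c': "c' \<in> range Cmap"
  shows "Psi (\<lambda>q. delta (madd Nc c c', m) q - delta (c, m) q - delta (c', m) q) \<in> Wset"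
proof -
  define d where "d = (\<lambda>j. lam (\<lambda>i. c i + c' i) j - lam c j - lam c' j)"
  have P: "Psi (\<lambda>q. delta (madd Nc c c', m) q - delta (c, m) q - delta (c', m) q) =
     (\<lambda>j j'. d j * mu m j')"
    unfolding Psi_def PsiW_gen3 d_def by (simp add: algebra_simps)
  have cc': "(\<lambda>i. c i + c' i) \<in> range Cmap"
  proof -
    obtain v w where "c = Cmap v" "c' = Cmap w" using c c' by auto
    then show ?thesis using Cmap_add[of v w] by (metis rangeI)
  qed
  have "Cmap d = (\<lambda>i. 0)"
    unfolding d_def Cmap_diff lam_prop[OF cc'] lam_prop[OF c] lam_prop[OF c'] by simp
  then have col: "\<forall>i<p. \<forall>j'. (\<Sum>j<n. ks i j * (d j * mu m j')) = 0"
    using Cmap0 colL by blast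
  show ?thesis unfolding P Wset_def
    by (intro CollectI exI[of _ "\<lambda>j j'. d j * mu m j'"] conjI) (use col lin_zero in simp_all)
qed

lemma Psi_gen2:
  assumes m: "m \<in> mcarrier M" and m': "m' \<in> mcarrier M"
  shows "Psi (\<lambda>q. delta (c, madd M m m') q - delta (c, m) q - delta (c, m') q) \<in> Wset"
proof -
  define e where "e = (\<lambda>j'. mu (madd M m m') j' - (mu m j' + mu m' j'))"
  have P: "Psi (\<lambda>q. delta (c, madd M m m') q - delta (c, m) q - delta (c, m') q) =
     (\<lambda>j j'. lam c j * e j')"
    unfolding Psi_def PsiW_gen3 e_def by (simp add: algebra_simps)
  have "lin (mu (madd M m m')) = lin (\<lambda>j'. mu m j' + mu m' j')"
    using mu_prop m m' lin_add by simp
  then have e0: "lin e = mzero M" unfolding e_def by (rule lin_diff0)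
  have "\<forall>j<n. lin (\<lambda>j'. lam c j * e j' - 0) = mzero M"
    using lin_smult e0 by simp
  then show ?thesis unfolding P Wset_def
    by (intro CollectI exI[of _ "\<lambda>j j'. 0"] conjI) simp_all
qed

lemma Psi_gen3:
  assumes c: "c \<in> range Cmap" and m: "m \<in> mcarrier M"
  shows "Psi (\<lambda>q. delta (msmult Nc r c, m) q - delta (c, msmult M r m) q) \<in> Wset"
proof -
  define d where "d = (\<lambda>j. lam (\<lambda>i. c i * r) j - lam c j * r)"
  define e where "e = (\<lambda>j'. r * mu m j' - mu (msmult M r m) j')"
  have P: "Psi (\<lambda>q. delta (msmult Nc r c, m) q - delta (c, msmult M r m) q) =
     (\<lambda>j j'. lam (\<lambda>i. c i * r) j * mu m j' - lam c j * mu (msmult M r m) j')"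
    unfolding Psi_def PsiW_gen2 by simp
  have cr: "(\<lambda>i. c i * r) \<in> range Cmap"
  proof -
    obtain v where "c = Cmap v" using c by auto
    then show ?thesis using Cmap_smult[of v r] by (metis rangeI)
  qed
  have "Cmap d = (\<lambda>i. 0)"
    unfolding d_def Cmap_diff Cmap_smult lam_prop[OF cr] lam_prop[OF c] by simp
  then have col: "\<forall>i<p. \<forall>j'. (\<Sum>j<n. ks i j * (d j * mu m j')) = 0"
    using Cmap0 colL by blast
  have "lin (\<lambda>j'. r * mu m j') = lin (mu (msmult M r m))"
    using lin_smult mu_prop m by simp
  then have e0: "lin e = mzero M" unfolding e_def by (rule lin_diff0)
  have eq: "(\<lambda>j'. (lam (\<lambda>i. c i * r) j * mu m j' - lam c j * mu (msmult M r m) j') - d j * mu m j')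
      = (\<lambda>j'. lam c j * e j')" for j
    unfolding d_def e_def by (simp add: algebra_simps)
  have "\<forall>j<n. lin (\<lambda>j'. (lam (\<lambda>i. c i * r) j * mu m j' - lam c j * mu (msmult M r m) j') - d j * mu m j') = mzero M"
    unfolding eq using lin_smult e0 by simp
  then show ?thesis unfolding P Wset_def
    by (intro CollectI exI[of _ "\<lambda>j j'. d j * mu m j'"] conjI) (use col in simp_all)
qed

lemma Psi_gen: "g \<in> tensor_gens Nc M \<Longrightarrow> Psi g \<in> Wset"
  unfolding tensor_gens_def
proof (elim UnE CollectE exE conjE)
  fix n' n'' m assume "g = (\<lambda>q. delta (madd Nc n' n'', m) q - delta (n', m) q - delta (n'', m) q)"
    "n' \<in> mcarrier Nc" "n'' \<in> mcarrier Nc" "m \<in> mcarrier M"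
  then show "Psi g \<in> Wset" using Psi_gen1 by simp
next
  fix n' m m' assume "g = (\<lambda>q. delta (n', madd M m m') q - delta (n', m) q - delta (n', m') q)"
    "n' \<in> mcarrier Nc" "m \<in> mcarrier M" "m' \<in> mcarrier M"
  then show "Psi g \<in> Wset" using Psi_gen2 by simp
next
  fix n' r m assume "g = (\<lambda>q. delta (msmult Nc r n', m) q - delta (n', msmult M r m) q)"
    "n' \<in> mcarrier Nc" "m \<in> mcarrier M"
  then show "Psi g \<in> Wset" using Psi_gen3 by simp
qed

lemma Psi_tr: "f \<in> tensor_rel Nc M \<Longrightarrow> Psi f \<in> Wset"
proof (induction rule: tensor_rel.induct)
  case zero
  have "Psi (\<lambda>q. 0) = (\<lambda>j j'. 0)" unfolding Psi_def PsiW_zero by simp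
  then show ?case using Wset_zero by simp
next
  case (add f g)
  have "Psi (\<lambda>q. f q + g q) = (\<lambda>j j'. Psi f j j' + Psi g j j')"
    by (rule Psi_add[OF tr_finite[OF add.hyps(1)] gens_finite[OF add.hyps(2)]])
  then show ?case using Wset_add[OF add.IH Psi_gen[OF add.hyps(2)]] by simp
next
  case (sub f g)
  have "Psi (\<lambda>q. f q - g q) = (\<lambda>j j'. Psi f j j' - Psi g j j')"
    by (rule Psi_diff[OF tr_finite[OF sub.hyps(1)] gens_finite[OF sub.hyps(2)]])
  then show ?case using Wset_diff[OF sub.IH Psi_gen[OF sub.hyps(2)]] by simp
qed

end


context step3
begin

lemma z_supp: "{q. z q \<noteq> 0} \<subseteq> (\<lambda>j. (cc j, xs j)) ` {..<n}"
proof
  fix q assume "q \<in> {q. z q \<noteq> 0}"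
  then have "(\<Sum>j<n. delta (cc j, xs j) q) \<noteq> 0" unfolding z_def by simp
  then obtain j where "j < n" "delta (cc j, xs j) q \<noteq> 0"
    by (metis (mono_tags, lifting) lessThan_iff sum.neutral)
  then show "q \<in> (\<lambda>j. (cc j, xs j)) ` {..<n}" unfolding delta_def by (auto split: if_splits)
qed

lemma z_Nc: assumes fl: "flat M" shows "z \<in> tensor_rel Nc M"
proof -
  have fin: "finite {q. z q \<noteq> 0}" by (rule finite_subset[OF z_supp]) simp
  have sub: "{q. z q \<noteq> 0} \<subseteq> range Cmap \<times> mcarrier M"
    using z_supp xs_in unfolding cc_def by fastforce
  have rm: "right_module (Nm\<lparr>mcarrier := range Cmap\<rparr>)" using right_module_Nc unfolding Nc_def .
  have "\<forall>z. finite {p. z p \<noteq> 0} \<and> {p. z p \<noteq> 0} \<subseteq> range Cmap \<times> mcarrier M \<and>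
          z \<in> tensor_rel Nm M \<longrightarrow> z \<in> tensor_rel (Nm\<lparr>mcarrier := range Cmap\<rparr>) M"
    using fl right_module_Nm range_Cmap_sub rm unfolding flat_def by blast
  then show ?thesis using fin sub z_rel unfolding Nc_def by blast
qed

lemma Psi_z: "j' < n \<Longrightarrow> Psi z j j' = lam (cc j') j"
proof -
  assume j': "j' < n"
  have "Psi z j j' = (\<Sum>k<n. lam (cc k) j * mu (xs k) j')"
    unfolding Psi_def z_def using PsiW_sumdelta[where w="\<lambda>q. lam (fst q) j * mu (snd q) j'" and N=n and a="\<lambda>k. (cc k, xs k)"]
    by simp
  also have "\<dots> = (\<Sum>k<n. if k = j' then lam (cc k) j else 0)"
    by (rule sum.cong) (auto simp: mu_xs unitv_def)
  also have "\<dots> = lam (cc j') j" using j' by (simp add: sum.delta')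
  finally show ?thesis .
qed

lemma extract_T:
  assumes fl: "flat M"
  shows "\<exists>T. (\<forall>j<n. lin (T j) = mzero M) \<and> (\<forall>i<p. \<forall>j'<n. (\<Sum>j<n. ks i j * T j j') = ks i j')"
proof -
  have "Psi z \<in> Wset" by (rule Psi_tr[OF z_Nc[OF fl]])
  then obtain B where B: "\<forall>i<p. \<forall>j'. (\<Sum>j<n. ks i j * B j j') = 0"
     "\<forall>j<n. lin (\<lambda>j'. Psi z j j' - B j j') = mzero M"
    unfolding Wset_def by blast
  define B' where "B' = (\<lambda>j j'. B j j' + (if j' < n then unitv j' j - lam (cc j') j else 0))"
  define T where "T = (\<lambda>j j'. unitv j j' - B' j j')"
  have colB': "(\<Sum>j<n. ks i j * B' j j') = 0" if i: "i < p" for i j'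
  proof (cases "j' < n")
    case True
    have ccr: "cc j' \<in> range Cmap" unfolding cc_def by simp
    have "Cmap (\<lambda>j. unitv j' j - lam (cc j') j) = (\<lambda>i. 0)"
      unfolding Cmap_diff lam_prop[OF ccr] by (simp add: cc_def unitv_def)
    then have "(\<Sum>j<n. ks i j * (unitv j' j - lam (cc j') j)) = 0" using Cmap0 i by blast
    then show ?thesis unfolding B'_def using B(1) i True by (simp add: distrib_left sum.distrib)
  next
    case False
    then show ?thesis unfolding B'_def using B(1) i by simp
  qed
  have linT: "lin (T j) = mzero M" if j: "j < n" for j
  proof -
    have "lin (T j) = lin (\<lambda>j'. Psi z j j' - B j j')"
      by (rule lin_cong) (simp add: T_def B'_def Psi_z unitv_def)
    then show ?thesis using B(2) j by simp
  qed
  have thk: "(\<Sum>j<n. ks i j * T j j') = ks i j'" if i: "i < p" and j': "j' < n" for i j'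
  proof -
    have "(\<Sum>j<n. ks i j * T j j') = (\<Sum>j<n. ks i j * unitv j j') - (\<Sum>j<n. ks i j * B' j j')"
      unfolding T_def by (simp add: right_diff_distrib sum_subtractf)
    also have "(\<Sum>j<n. ks i j * unitv j j') = (\<Sum>j<n. if j = j' then ks i j else 0)"
      by (rule sum.cong) (auto simp: unitv_def)
    also have "\<dots> = ks i j'" using j' by (simp add: sum.delta)
    finally show ?thesis using colB'[OF i] by simp
  qed
  show ?thesis using linT thk by blast
qed

end


context step3
begin

definition aof :: "'m \<Rightarrow> nat \<Rightarrow> 'a" where "aof m = (SOME a. lin a = m)"

lemma aof: "m \<in> mcarrier M \<Longrightarrow> lin (aof m) = m"
proof -
  assume "m \<in> mcarrier M"
  then have "\<exists>a. lin a = m" by (rule span)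
  then show ?thesis unfolding aof_def by (rule someI_ex)
qed

lemma free_simps: "mcarrier (free_lmod I) = {f. finite {i. f i \<noteq> 0} \<and> (\<forall>i. i \<notin> I \<longrightarrow> f i = 0)}"
   "madd (free_lmod I) = (\<lambda>f g i. f i + g i)" "msmult (free_lmod I) = (\<lambda>r f i. r * f i)"
  unfolding free_lmod_def by simp_all

lemma proj_from_T:
  fixes T :: "nat \<Rightarrow> nat \<Rightarrow> 'a"
  assumes T1: "\<And>j. j < n \<Longrightarrow> lin (T j) = mzero M"
    and T2: "\<And>a j'. lin a = mzero M \<Longrightarrow> j' < n \<Longrightarrow> (\<Sum>j<n. a j * T j j') = a j'"
  shows "projective M"
proof -
  define G where "G = xs ` {..<n}"
  define w where "w = (\<lambda>a j'. a j' - (\<Sum>j<n. a j * T j j'))"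
  define \<iota> where "\<iota> = (\<lambda>m g. if g \<in> G then w (aof m) (idx g) else 0)"
  define \<pi> where "\<pi> = (\<lambda>f. lin (\<lambda>j. f (xs j)))"
  have wd: "w a j' = w b j'" if "lin a = lin b" "j' < n" for a b j'
  proof -
    have "lin (\<lambda>j. a j - b j) = mzero M" using that(1) by (rule lin_diff0)
    then have "(\<Sum>j<n. (a j - b j) * T j j') = a j' - b j'" using T2 that(2) by blast
    then show ?thesis unfolding w_def by (simp add: left_diff_distrib sum_subtractf algebra_simps)
  qed
  have w_add: "w (\<lambda>j. a j + b j) j' = w a j' + w b j'" for a b j'
    unfolding w_def by (simp add: distrib_right sum.distrib algebra_simps)
  have w_smult: "w (\<lambda>j. r * a j) j' = r * w a j'" for a r j'
    unfolding w_def by (simp add: sum_distrib_left mult.assoc right_diff_distrib)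
  have idxG: "g \<in> G \<Longrightarrow> idx g < n" for g unfolding G_def using idx_xs by auto
  have iota_in: "\<iota> m \<in> mcarrier (free_lmod G)" for m
  proof -
    have "finite G" unfolding G_def by simp
    then have "finite {g. \<iota> m g \<noteq> 0}" by (rule finite_subset[rotated]) (auto simp: \<iota>_def)
    then show ?thesis unfolding free_simps by (auto simp: \<iota>_def)
  qed
  have iota_hom: "\<iota> \<in> mod_hom M (free_lmod G)"
    unfolding mod_hom_def
  proof (intro CollectI conjI ballI allI)
    fix x show "\<iota> x \<in> mcarrier (free_lmod G)" by (rule iota_in)
  next
    fix x y assume x: "x \<in> mcarrier M" and y: "y \<in> mcarrier M"
    have L: "lin (aof (madd M x y)) = lin (\<lambda>j. aof x j + aof y j)"
      using aof x y lin_add by simp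
    have "w (aof (madd M x y)) j' = w (aof x) j' + w (aof y) j'" if "j' < n" for j'
      using wd[OF L that] w_add by simp
    then show "\<iota> (madd M x y) = madd (free_lmod G) (\<iota> x) (\<iota> y)"
      unfolding free_simps \<iota>_def
    proof (intro ext)
      fix g assume h: "\<And>j'. j' < n \<Longrightarrow> w (aof (madd M x y)) j' = w (aof x) j' + w (aof y) j'"
      show "(if g \<in> G then w (aof (madd M x y)) (idx g) else 0) =
         (if g \<in> G then w (aof x) (idx g) else 0) + (if g \<in> G then w (aof y) (idx g) else 0)"
        by (cases "g \<in> G") (simp_all add: h idxG)
    qed
  next
    fix r x assume x: "x \<in> mcarrier M"
    have L: "lin (aof (msmult M r x)) = lin (\<lambda>j. r * aof x j)"
      using aof x lin_smult by simp
    have "w (aof (msmult M r x)) j' = r * w (aof x) j'" if "j' < n" for j'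
      using wd[OF L that] w_smult by simp
    then show "\<iota> (msmult M r x) = msmult (free_lmod G) r (\<iota> x)"
      unfolding free_simps \<iota>_def
    proof (intro ext)
      fix g assume h: "\<And>j'. j' < n \<Longrightarrow> w (aof (msmult M r x)) j' = r * w (aof x) j'"
      show "(if g \<in> G then w (aof (msmult M r x)) (idx g) else 0) =
         r * (if g \<in> G then w (aof x) (idx g) else 0)"
        by (cases "g \<in> G") (simp_all add: h idxG)
    qed
  qed
  have pi_hom: "\<pi> \<in> mod_hom (free_lmod G) M"
    unfolding mod_hom_def
  proof (intro CollectI conjI ballI allI)
    fix x show "\<pi> x \<in> mcarrier M" unfolding \<pi>_def by simp
  next
    fix x y show "\<pi> (madd (free_lmod G) x y) = madd M (\<pi> x) (\<pi> y)"
      unfolding \<pi>_def free_simps by (rule lin_add)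
  next
    fix r x show "\<pi> (msmult (free_lmod G) r x) = msmult M r (\<pi> x)"
      unfolding \<pi>_def free_simps by (rule lin_smult)
  qed
  have pi_iota: "\<pi> (\<iota> x) = x" if x: "x \<in> mcarrier M" for x
  proof -
    have "\<pi> (\<iota> x) = lin (w (aof x))"
      unfolding \<pi>_def by (rule lin_cong) (auto simp: \<iota>_def G_def idx_xs)
    also have "\<dots> = lin (aof x)"
      unfolding w_def by (rule lin_diffK) (rule lin_sumvec, rule T1)
    also have "\<dots> = x" using aof x by simp
    finally show ?thesis .
  qed
  show ?thesis unfolding projective_def
    by (intro exI[of _ G] exI[of _ \<iota>] exI[of _ \<pi>] conjI ballI iota_hom pi_hom pi_iota)
qed

end


lemma sig_zero:
  fixes \<sigma> :: "'a::ring_1 \<Rightarrow> 'q::ring_1"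
  assumes "\<forall>x y. \<sigma> (x + y) = \<sigma> x + \<sigma> y"
  shows "\<sigma> 0 = 0"
proof -
  have "\<sigma> (0 + 0) = \<sigma> 0 + \<sigma> 0" using assms by blast
  then show ?thesis by simp
qed

lemma sig_sum:
  fixes N :: nat and \<sigma> :: "'a::ring_1 \<Rightarrow> 'q::ring_1"
  assumes "\<forall>x y. \<sigma> (x + y) = \<sigma> x + \<sigma> y"
  shows "\<sigma> (\<Sum>i<N. f i) = (\<Sum>i<N. \<sigma> (f i))"
proof (induction N)
  case 0 then show ?case using sig_zero[OF assms] by simp
next
  case (Suc N) then show ?case using assms by simp
qed

lemma sig_inj:
  fixes \<sigma> :: "'a::ring_1 \<Rightarrow> 'q::ring_1"
  assumes lrf: "is_left_ring_of_fractions (S0 :: 'a set) \<sigma>" and eq: "\<sigma> x = \<sigma> y"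
  shows "x = y"
proof -
  have add: "\<forall>x y. \<sigma> (x + y) = \<sigma> x + \<sigma> y" using lrf unfolding is_left_ring_of_fractions_def by blast
  have ker: "\<forall>r. \<sigma> r = 0 \<longleftrightarrow> (\<exists>s\<in>S0. s * r = 0)" using lrf unfolding is_left_ring_of_fractions_def by blast
  have "\<sigma> ((x - y) + y) = \<sigma> (x - y) + \<sigma> y" using add by blast
  then have "\<sigma> (x - y) = 0" using eq by simp
  then obtain s where s: "s \<in> S0" "s * (x - y) = 0" using ker by blast
  then have "x - y = 0" using S0_regular unfolding regular_elem_def by blast
  then show ?thesis by simp
qed

theorem corollary2p12:
  fixes M :: "('a::ring_1, 'm) lmod"
    and \<sigma> :: "'a \<Rightarrow> 'q::ring_1"
  assumes "left_module M"
    and "finitely_generated M"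
    and "flat M"
    and "\<not> projective M"
    and "is_left_ring_of_fractions (S0 :: 'a set) \<sigma>"
  shows "\<not> semisimple_ring TYPE('q)"
proof
  assume ss: "semisimple_ring TYPE('q)"
  note lmM = assms(1) and fgM = assms(2) and flM = assms(3) and np = assms(4) and lrf = assms(5)
  have sadd: "\<forall>x y. \<sigma> (x + y) = \<sigma> x + \<sigma> y" and smul: "\<forall>x y. \<sigma> (x * y) = \<sigma> x * \<sigma> y"
    using lrf unfolding is_left_ring_of_fractions_def by blast+
  interpret lmodule M using lmM by (rule lmodule.intro)
  have "\<exists>G. finite G \<and> G \<subseteq> mcarrier M \<and> mcarrier M = mspan M G"
    using fgM unfolding finitely_generated_def by blast
  then obtain G where G: "finite G" "G \<subseteq> mcarrier M" "mcarrier M = mspan M G" by blast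
  have "\<exists>(n::nat) f. G = f ` {i. i < n} \<and> inj_on f {i. i < n}"
    by (rule finite_imp_nat_seg_image_inj_on[OF G(1)])
  then obtain n and xs :: "nat \<Rightarrow> 'm" where nx: "G = xs ` {..<n}" "inj_on xs {..<n}"
    by (auto simp: lessThan_def)
  have xs_in: "\<And>j. j < n \<Longrightarrow> xs j \<in> mcarrier M" using G(2) nx(1) by auto
  interpret fg: fgmod M xs n
    by (rule fgmod.intro) (use lmM xs_in in \<open>simp_all add: lmodule_def fgmod_axioms_def\<close>)
  have span0: "\<exists>a. fg.lin a = m" if "m \<in> mspan M G" for m
    using that
  proof (induction rule: mspan.induct)
    case zero then show ?case using fg.lin_zero by blast
  next
    case (step x g r)
    then obtain a where a: "fg.lin a = x" by blast
    obtain k where k: "k < n" "g = xs k" using step.hyps(2) nx(1) by auto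
    define u where "u = (\<lambda>j. if j = k then (1::'a) else 0)"
    have "fg.lin (\<lambda>j. a j + r * u j) = madd M (fg.lin a) (fg.lin (\<lambda>j. r * u j))" by (rule fg.lin_add)
    also have "\<dots> = madd M x (msmult M r g)" using a fg.lin_smult fg.lin_unit[OF k(1)] k(2) unfolding u_def by simp
    finally show ?case by blast
  qed
  have span: "\<And>m. m \<in> mcarrier M \<Longrightarrow> \<exists>a. fg.lin a = m" using span0 G(3) by blast
  define K where "K = {a. fg.lin a = mzero M}"
  have "\<exists>F. finite F \<and> F \<subseteq> K \<and> (\<forall>a\<in>K. \<exists>c. \<forall>j<n. \<sigma> (a j) = (\<Sum>b\<in>F. c b * \<sigma> (b j)))"
    by (rule noeth[OF ss])
  then obtain F where F: "finite F" "F \<subseteq> K" "\<forall>a\<in>K. \<exists>c. \<forall>j<n. \<sigma> (a j) = (\<Sum>b\<in>F. c b * \<sigma> (b j))"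
    by blast
  have "\<exists>(p::nat) f. F = f ` {i. i < p} \<and> inj_on f {i. i < p}"
    by (rule finite_imp_nat_seg_image_inj_on[OF F(1)])
  then obtain p and fs :: "nat \<Rightarrow> nat \<Rightarrow> 'a" where pf: "F = fs ` {..<p}" "inj_on fs {..<p}"
    by (auto simp: lessThan_def)
  have fsK: "\<And>i. i < p \<Longrightarrow> fg.lin (fs i) = mzero M" using F(2) pf(1) unfolding K_def by auto
  interpret st: step3 M xs n fs p
  proof -
    show "step3 M xs n fs p"
      unfolding step3_def step2_def step3_axioms_def step2_axioms_def
      using fg.fgmod_axioms fsK nx(2) span by blast
  qed
  obtain T where T: "\<forall>j<n. fg.lin (T j) = mzero M" "\<forall>i<p. \<forall>j'<n. (\<Sum>j<n. fs i j * T j j') = fs i j'"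
    using st.extract_T[OF flM] by blast
  have T2: "(\<Sum>j<n. a j * T j j') = a j'" if a: "fg.lin a = mzero M" and j': "j' < n" for a j'
  proof -
    obtain c where c: "\<forall>j<n. \<sigma> (a j) = (\<Sum>b\<in>F. c b * \<sigma> (b j))" using F(3) a unfolding K_def by blast
    have c': "\<sigma> (a j) = (\<Sum>i<p. c (fs i) * \<sigma> (fs i j))" if "j < n" for j
    proof -
      have "(\<Sum>b\<in>F. c b * \<sigma> (b j)) = (\<Sum>i<p. c (fs i) * \<sigma> (fs i j))"
        unfolding pf(1) by (subst sum.reindex[OF pf(2)]) simp
      then show ?thesis using c that by simp
    qed
    have "\<sigma> (\<Sum>j<n. a j * T j j') = (\<Sum>j<n. \<sigma> (a j) * \<sigma> (T j j'))"
      using sig_sum[OF sadd] smul by simp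
    also have "\<dots> = (\<Sum>j<n. (\<Sum>i<p. c (fs i) * \<sigma> (fs i j)) * \<sigma> (T j j'))"
      by (rule sum.cong) (simp_all add: c')
    also have "\<dots> = (\<Sum>j<n. \<Sum>i<p. c (fs i) * (\<sigma> (fs i j) * \<sigma> (T j j')))"
      by (simp add: sum_distrib_right mult.assoc)
    also have "\<dots> = (\<Sum>i<p. \<Sum>j<n. c (fs i) * (\<sigma> (fs i j) * \<sigma> (T j j')))"
      by (rule sum.swap)
    also have "\<dots> = (\<Sum>i<p. c (fs i) * \<sigma> (\<Sum>j<n. fs i j * T j j'))"
      using sig_sum[OF sadd] smul by (simp add: sum_distrib_left)
    also have "\<dots> = (\<Sum>i<p. c (fs i) * \<sigma> (fs i j'))"
      by (rule sum.cong) (simp_all add: T(2) j')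
    also have "\<dots> = \<sigma> (a j')" using c'[OF j'] by simp
    finally show ?thesis by (rule sig_inj[OF lrf])
  qed
  have "projective M"
    by (rule st.proj_from_T[of T]) (use T(1) T2 in auto)
  then show False using np by blast
qed

end
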